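(* In the setting of the context, $\Pi^\rho_0\ne\emptyset$ if and only if $\rho_0=0$. Moreover, in this case either $\Pi^\rho_0=\{\mathbf{0}\}$ or $\Pi^\rho_0$ fails to be compact.
   Context: Let $(\Omega,\mathcal{F},\mathbb{P})$ be a probability space and a market: riskless asset $S^0_0=1$, $S^0_1=1+r$, $r>-1$; risky assets $S^1,\dots,S^d$ with constants $S^i_0>0$ and real-valued $\mathcal{F}$-measurable $S^i_1$; returns $R^i:=(S^i_1-S^i_0)/S^i_0$. Standing assumptions: nonredundancy (if $\theta\in\mathbb{R}^{1+d}$ with $\sum_{i=0}^d\theta^iS^i_t=0$ a.s. for $t\in\{0,1\}$ then $\theta=0$), $R^i\in L^1$, $\mathbb{E}[R^i]\ne r$ for some $i$. Excess return of $\pi\in\mathbb{R}^d$: $X_\pi:=\pi\cdot(R-r\mathbf{1})$; $\Pi_0:=\{\pi:\mathbb{E}[X_\pi]=0\}$. $L$ is a Riesz space with $L^\infty\subset L\subset L^1$ containing all $X_\pi$; $\rho:L\to(-\infty,\infty]$ is monotone, cash-invariant ($\rho(X+c)=\rho(X)-c$) and positively homogeneous ($\rho(\lambda X)=\lambda\rho(X)$, $\lambda\ge0$). $\rho_0:=\inf\{\rho(X_\pi):\pi\in\Pi_0\}$ and $\Pi^\rho_0$ is the set of $\pi\in\Pi_0$ with $\rho(X_\pi)<\infty$ and $\rho(X_\pi)\le\rho(X_{\pi'})$ for all $\pi'\in\Pi_0$. *)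

theory Defs
  imports "HOL-Probability.Probability"
begin

text \<open>One-period market. Risky assets are indexed by the finite type 'd
(so d = CARD('d)); portfolios are vectors in real^'d.\<close>

definition returns :: "('d \<Rightarrow> real) \<Rightarrow> ('d \<Rightarrow> 'a \<Rightarrow> real) \<Rightarrow> 'd \<Rightarrow> 'a \<Rightarrow> real" where
  "returns S0 S1 i \<omega> = (S1 i \<omega> - S0 i) / S0 i"

definition excess_return ::
  "real \<Rightarrow> ('d::finite \<Rightarrow> real) \<Rightarrow> ('d \<Rightarrow> 'a \<Rightarrow> real) \<Rightarrow> real^'d \<Rightarrow> 'a \<Rightarrow> real" where
  "excess_return r S0 S1 \<pi> \<omega> = (\<Sum>i\<in>UNIV. \<pi> $ i * (returns S0 S1 i \<omega> - r))"

definition market :: "'a measure \<Rightarrow> real \<Rightarrow> ('d::finite \<Rightarrow> real) \<Rightarrow> ('d \<Rightarrow> 'a \<Rightarrow> real) \<Rightarrow> bool" where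
  "market M r S0 S1 \<longleftrightarrow>
     prob_space M \<and> r > -1 \<and> (\<forall>i. S0 i > 0) \<and> (\<forall>i. S1 i \<in> borel_measurable M) \<and>
     \<comment> \<open>nonredundancy\<close>
     (\<forall>(\<theta>0::real) (\<theta>::real^'d).
        (\<theta>0 + (\<Sum>i\<in>UNIV. \<theta> $ i * S0 i) = 0 \<and>
         (AE \<omega> in M. \<theta>0 * (1 + r) + (\<Sum>i\<in>UNIV. \<theta> $ i * S1 i \<omega>) = 0))
        \<longrightarrow> \<theta>0 = 0 \<and> \<theta> = 0) \<and>
     (\<forall>i. integrable M (returns S0 S1 i)) \<and>
     (\<exists>i. integral\<^sup>L M (returns S0 S1 i) \<noteq> r)"

text \<open>L: a Riesz space (linear subspace closed under pointwise max, i.e. a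
vector sublattice) of random variables with L^\<infinity> \<subseteq> L \<subseteq> L^1, containing all
excess returns.\<close>
definition admissible_space :: "'a measure \<Rightarrow> ('a \<Rightarrow> real) set \<Rightarrow> bool" where
  "admissible_space M L \<longleftrightarrow>
     (\<forall>X\<in>L. \<forall>Y\<in>L. (\<lambda>\<omega>. X \<omega> + Y \<omega>) \<in> L) \<and>
     (\<forall>X\<in>L. \<forall>c::real. (\<lambda>\<omega>. c * X \<omega>) \<in> L) \<and>
     (\<forall>X\<in>L. \<forall>Y\<in>L. (\<lambda>\<omega>. max (X \<omega>) (Y \<omega>)) \<in> L) \<and>
     (\<forall>X. X \<in> borel_measurable M \<and> (\<exists>C. AE \<omega> in M. \<bar>X \<omega>\<bar> \<le> C) \<longrightarrow> X \<in> L) \<and>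
     (\<forall>X\<in>L. integrable M X)"

definition risk_functional :: "'a measure \<Rightarrow> ('a \<Rightarrow> real) set \<Rightarrow> (('a \<Rightarrow> real) \<Rightarrow> ereal) \<Rightarrow> bool" where
  "risk_functional M L \<rho> \<longleftrightarrow>
     (\<forall>X\<in>L. \<rho> X \<noteq> -\<infinity>) \<and>
     (\<forall>X\<in>L. \<forall>Y\<in>L. (AE \<omega> in M. X \<omega> \<le> Y \<omega>) \<longrightarrow> \<rho> Y \<le> \<rho> X) \<and>
     (\<forall>X\<in>L. \<forall>c::real. \<rho> (\<lambda>\<omega>. X \<omega> + c) = \<rho> X - ereal c) \<and>
     (\<forall>X\<in>L. \<forall>t::real. t \<ge> 0 \<longrightarrow> \<rho> (\<lambda>\<omega>. t * X \<omega>) = ereal t * \<rho> X)"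

definition Pi0 :: "'a measure \<Rightarrow> real \<Rightarrow> ('d::finite \<Rightarrow> real) \<Rightarrow> ('d \<Rightarrow> 'a \<Rightarrow> real) \<Rightarrow> (real^'d) set" where
  "Pi0 M r S0 S1 = {\<pi>. integral\<^sup>L M (excess_return r S0 S1 \<pi>) = 0}"

definition rho0 :: "'a measure \<Rightarrow> real \<Rightarrow> ('d::finite \<Rightarrow> real) \<Rightarrow> ('d \<Rightarrow> 'a \<Rightarrow> real)
    \<Rightarrow> (('a \<Rightarrow> real) \<Rightarrow> ereal) \<Rightarrow> ereal" where
  "rho0 M r S0 S1 \<rho> = (INF \<pi>\<in>Pi0 M r S0 S1. \<rho> (excess_return r S0 S1 \<pi>))"

definition Pi0_rho :: "'a measure \<Rightarrow> real \<Rightarrow> ('d::finite \<Rightarrow> real) \<Rightarrow> ('d \<Rightarrow> 'a \<Rightarrow> real)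
    \<Rightarrow> (('a \<Rightarrow> real) \<Rightarrow> ereal) \<Rightarrow> (real^'d) set" where
  "Pi0_rho M r S0 S1 \<rho> = {\<pi>\<in>Pi0 M r S0 S1. \<rho> (excess_return r S0 S1 \<pi>) < \<infinity> \<and>
       (\<forall>\<pi>'\<in>Pi0 M r S0 S1. \<rho> (excess_return r S0 S1 \<pi>) \<le> \<rho> (excess_return r S0 S1 \<pi>'))}"

end

theory Submission
  imports Defs
begin

lemma ER_scale:
  "excess_return r S0 S1 (t *\<^sub>R \<pi>) = (\<lambda>\<omega>. t * excess_return r S0 S1 \<pi> \<omega>)"
  by (rule ext) (simp add: excess_return_def sum_distrib_left mult.assoc)

lemma ER_zero: "excess_return r S0 S1 0 = (\<lambda>\<omega>. 0)"
  by (rule ext) (simp add: excess_return_def)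

lemma Pi0_scale: "\<pi> \<in> Pi0 M r S0 S1 \<Longrightarrow> t *\<^sub>R \<pi> \<in> Pi0 M r S0 S1"
  by (simp add: Pi0_def ER_scale)

lemma Pi0_zero: "0 \<in> Pi0 M r S0 S1"
  by (simp add: Pi0_def ER_zero)

theorem proposition3p6:
  fixes M :: "'a measure" and r :: real
    and S0 :: "'d::finite \<Rightarrow> real" and S1 :: "'d \<Rightarrow> 'a \<Rightarrow> real"
    and L :: "('a \<Rightarrow> real) set" and \<rho> :: "('a \<Rightarrow> real) \<Rightarrow> ereal"
  assumes "market M r S0 S1"
    and "admissible_space M L"
    and "\<forall>\<pi>. excess_return r S0 S1 \<pi> \<in> L"
    and "risk_functional M L \<rho>"
  shows "(Pi0_rho M r S0 S1 \<rho> \<noteq> {} \<longleftrightarrow> rho0 M r S0 S1 \<rho> = 0) \<and>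
         (Pi0_rho M r S0 S1 \<rho> \<noteq> {} \<longrightarrow>
            Pi0_rho M r S0 S1 \<rho> = {0} \<or> \<not> compact (Pi0_rho M r S0 S1 \<rho>))"
proof -
  let ?X = "excess_return r S0 S1"
  let ?P = "Pi0 M r S0 S1"
  let ?R = "Pi0_rho M r S0 S1 \<rho>"
  have inL: "\<And>\<pi>. ?X \<pi> \<in> L" using assms(3) by blast
  have ninf: "\<And>\<pi>. \<rho> (?X \<pi>) \<noteq> -\<infinity>" using assms(4) inL unfolding risk_functional_def by blast
  have hom: "\<And>\<pi> t. t \<ge> 0 \<Longrightarrow> \<rho> (?X (t *\<^sub>R \<pi>)) = ereal t * \<rho> (?X \<pi>)"
    using assms(4) inL unfolding risk_functional_def ER_scale by blast
  have z: "\<rho> (?X 0) = 0"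
    using hom[of 0 0] by (simp add: zero_ereal_def[symmetric])
  have key: "\<rho> (?X \<pi>) = 0" if "\<pi> \<in> ?R" for \<pi>
  proof -
    have lt: "\<rho> (?X \<pi>) < \<infinity>" and le: "\<And>\<pi>'. \<pi>' \<in> ?P \<Longrightarrow> \<rho> (?X \<pi>) \<le> \<rho> (?X \<pi>')"
      and inP: "\<pi> \<in> ?P"
      using that unfolding Pi0_rho_def by auto
    have "\<rho> (?X \<pi>) \<le> 0" using le[OF Pi0_zero] z by simp
    moreover have "\<rho> (?X \<pi>) \<le> ereal 2 * \<rho> (?X \<pi>)"
      using le[OF Pi0_scale[OF inP, of 2]] hom[of 2 \<pi>] by simp
    moreover obtain c where c: "\<rho> (?X \<pi>) = ereal c" using lt ninf[of \<pi>]
      by (cases "\<rho> (?X \<pi>)") auto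
    ultimately show ?thesis by simp
  qed
  have part1: "?R \<noteq> {} \<longleftrightarrow> rho0 M r S0 S1 \<rho> = 0"
  proof
    assume "?R \<noteq> {}"
    then obtain \<pi> where p: "\<pi> \<in> ?R" by blast
    have inP: "\<pi> \<in> ?P" and le: "\<And>\<pi>'. \<pi>' \<in> ?P \<Longrightarrow> \<rho> (?X \<pi>) \<le> \<rho> (?X \<pi>')"
      using p unfolding Pi0_rho_def by auto
    have "rho0 M r S0 S1 \<rho> = \<rho> (?X \<pi>)"
      unfolding rho0_def
      by (rule antisym) (auto intro: INF_lower INF_greatest le inP)
    thus "rho0 M r S0 S1 \<rho> = 0" using key[OF p] by simp
  next
    assume h: "rho0 M r S0 S1 \<rho> = 0"
    have "0 \<in> ?R"
    proof -
      have "\<rho> (?X \<pi>') \<ge> 0" if "\<pi>' \<in> ?P" for \<pi>'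
        using h that unfolding rho0_def by (metis INF_lower)
      thus ?thesis unfolding Pi0_rho_def using Pi0_zero z by auto
    qed
    thus "?R \<noteq> {}" by blast
  qed
  have part2: "?R = {0} \<or> \<not> compact ?R" if ne: "?R \<noteq> {}"
  proof (cases "?R = {0}")
    case True then show ?thesis by blast
  next
    case False
    then obtain \<pi> where p: "\<pi> \<in> ?R" and nz: "\<pi> \<noteq> 0" using ne by blast
    have inP: "\<pi> \<in> ?P" using p unfolding Pi0_rho_def by auto
    have r0: "rho0 M r S0 S1 \<rho> = 0" using part1 ne by blast
    have scl: "t *\<^sub>R \<pi> \<in> ?R" if t: "t \<ge> 0" for t
    proof -
      have e: "\<rho> (?X (t *\<^sub>R \<pi>)) = 0" using hom[OF t, of \<pi>] key[OF p] by simp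
      have "\<rho> (?X \<pi>') \<ge> 0" if "\<pi>' \<in> ?P" for \<pi>'
        using r0 that unfolding rho0_def by (metis INF_lower)
      thus ?thesis unfolding Pi0_rho_def using e Pi0_scale[OF inP] by auto
    qed
    have "\<not> compact ?R"
    proof
      assume "compact ?R"
      then have "bounded ?R" by (rule compact_imp_bounded)
      then obtain B where B: "\<And>x. x \<in> ?R \<Longrightarrow> norm x \<le> B" unfolding bounded_iff by blast
      have np: "norm \<pi> > 0" using nz by simp
      define t where "t = (\<bar>B\<bar> + 1) / norm \<pi>"
      have t0: "t \<ge> 0" unfolding t_def using np by simp
      have "norm (t *\<^sub>R \<pi>) = \<bar>B\<bar> + 1" unfolding t_def using np by simp
      with B[OF scl[OF t0]] show False by simp
    qed
    thus ?thesis by blast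
  qed
  show ?thesis using part1 part2 by blast
qed

end
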